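(* Let $m\ge 2$ and $n\ge 3$ be integers. Then $\chi_{ei}(P_m\square C_n)=6$ if $n=3$; $=5$ if $n=5$; $=4$ if $n=7$; $=2$ if $n$ is even; and $=3$ if $n$ is odd and $n\ge 9$.
   Context: All graphs are finite and simple. $P_k$ and $C_k$ denote the path and the cycle on $k$ vertices. A path $P_4$ in $G$ is a sequence $uxyv$ of four distinct vertices with $ux,xy,yv\in E(G)$; $u,v$ are its end vertices. An $e$-injective $k$-coloring of $G$ is a function $f:V(G)\to\{1,\dots,k\}$ with $f(u)\ne f(v)$ whenever $u,v$ are the end vertices of some path $P_4$ in $G$; $\chi_{ei}(G)$ is the least such $k$. In the Cartesian product $G\square H$ two vertices are adjacent if they are adjacent in one coordinate and equal in the other. *)

theory Defs
  imports Main
begin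

text \<open>A finite simple graph is represented by a vertex set V and a symmetric,
irreflexive adjacency predicate E (only pairs inside V are adjacent).\<close>

definition path_V :: "nat \<Rightarrow> nat set" where
  "path_V k = {..<k}"

definition path_E :: "nat \<Rightarrow> nat \<Rightarrow> nat \<Rightarrow> bool" where
  "path_E k i j \<longleftrightarrow> i < k \<and> j < k \<and> (i + 1 = j \<or> j + 1 = i)"

definition cycle_V :: "nat \<Rightarrow> nat set" where
  "cycle_V k = {..<k}"

definition cycle_E :: "nat \<Rightarrow> nat \<Rightarrow> nat \<Rightarrow> bool" where
  "cycle_E k i j \<longleftrightarrow> i < k \<and> j < k \<and> i \<noteq> j \<and> (j = (i + 1) mod k \<or> i = (j + 1) mod k)"

definition cart_V :: "'a set \<Rightarrow> 'b set \<Rightarrow> ('a \<times> 'b) set" where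
  "cart_V V1 V2 = V1 \<times> V2"

definition cart_E :: "'a set \<Rightarrow> ('a \<Rightarrow> 'a \<Rightarrow> bool) \<Rightarrow> 'b set \<Rightarrow> ('b \<Rightarrow> 'b \<Rightarrow> bool)
    \<Rightarrow> 'a \<times> 'b \<Rightarrow> 'a \<times> 'b \<Rightarrow> bool" where
  "cart_E V1 E1 V2 E2 u v \<longleftrightarrow>
     (E1 (fst u) (fst v) \<and> snd u = snd v \<and> snd u \<in> V2) \<or>
     (fst u = fst v \<and> fst u \<in> V1 \<and> E2 (snd u) (snd v))"

definition P4_ends :: "'a set \<Rightarrow> ('a \<Rightarrow> 'a \<Rightarrow> bool) \<Rightarrow> 'a \<Rightarrow> 'a \<Rightarrow> bool" where
  "P4_ends V E u v \<longleftrightarrow> (\<exists>x y. distinct [u, x, y, v] \<and> u \<in> V \<and> x \<in> V \<and> y \<in> V \<and> v \<in> V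
      \<and> E u x \<and> E x y \<and> E y v)"

definition e_injective_coloring :: "'a set \<Rightarrow> ('a \<Rightarrow> 'a \<Rightarrow> bool) \<Rightarrow> nat \<Rightarrow> ('a \<Rightarrow> nat) \<Rightarrow> bool" where
  "e_injective_coloring V E k f \<longleftrightarrow>
     (\<forall>v\<in>V. f v \<in> {1..k}) \<and> (\<forall>u v. P4_ends V E u v \<longrightarrow> f u \<noteq> f v)"

definition chi_ei :: "'a set \<Rightarrow> ('a \<Rightarrow> 'a \<Rightarrow> bool) \<Rightarrow> nat" where
  "chi_ei V E = (LEAST k. \<exists>f. e_injective_coloring V E k f)"

end

theory Submission imports Defs begin

abbreviation GV :: "nat \<Rightarrow> nat \<Rightarrow> (nat \<times> nat) set" where
  "GV m n \<equiv> cart_V (path_V m) (cycle_V n)"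
abbreviation GE :: "nat \<Rightarrow> nat \<Rightarrow> nat \<times> nat \<Rightarrow> nat \<times> nat \<Rightarrow> bool" where
  "GE m n \<equiv> cart_E (path_V m) (path_E m) (cycle_V n) (cycle_E n)"

lemma GV_iff: "u \<in> GV m n \<longleftrightarrow> fst u < m \<and> snd u < n"
  by (cases u) (auto simp: cart_V_def path_V_def cycle_V_def)

lemma GE_iff: "GE m n u x \<longleftrightarrow>
   ((fst u + 1 = fst x \<or> fst x + 1 = fst u) \<and> fst u < m \<and> fst x < m \<and> snd u = snd x \<and> snd u < n) \<or>
   (fst u = fst x \<and> fst u < m \<and> snd u < n \<and> snd x < n \<and> snd u \<noteq> snd x \<and>
      (snd x = (snd u + 1) mod n \<or> snd u = (snd x + 1) mod n))"
  by (auto simp: cart_E_def path_E_def cycle_E_def path_V_def cycle_V_def)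

definition T :: "nat \<times> nat \<Rightarrow> int" where "T u = int (fst u + snd u)"

lemma cyc_step: assumes "a < n" "b = (a + 1) mod n" shows "int b - int a - 1 = 0 \<or> int b - int a - 1 = - int n"
proof (cases "a + 1 < n")
  case True then show ?thesis using assms by simp
next
  case False then have "a + 1 = n" using assms by simp
  then show ?thesis using assms by auto
qed

lemma edge_T: assumes "GE m n u x"
  shows "\<exists>e\<in>{-1,1}. int n dvd (T x - T u - e)"
proof -
  from assms[unfolded GE_iff] show ?thesis
  proof (elim disjE conjE)
    assume "fst u + 1 = fst x" "snd u = snd x" then have "T x - T u - 1 = 0" by (auto simp: T_def)
    then have "int n dvd (T x - T u - 1)" by (metis dvd_0_right)
    then show ?thesis by blast
  next
    assume "fst x + 1 = fst u" "snd u = snd x" then have "T x - T u - (-1) = 0" by (auto simp: T_def)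
    then have "int n dvd (T x - T u - (-1))" by (metis dvd_0_right)
    then show ?thesis by blast
  next
    assume h: "fst u = fst x" "snd u < n" "snd x = (snd u + 1) mod n"
    from cyc_step[OF h(2,3)] have "int n dvd (T x - T u - 1)" using h(1) by (auto simp: T_def)
    then show ?thesis by blast
  next
    assume h: "fst u = fst x" "snd x < n" "snd u = (snd x + 1) mod n"
    from cyc_step[OF h(2,3)] have "int n dvd (T u - T x - 1)" using h(1) by (auto simp: T_def)
    then have "int n dvd (T x - T u - (-1))" 
    proof -
      have "T x - T u - (-1) = - (T u - T x - 1)" by simp
      then show ?thesis using \<open>int n dvd (T u - T x - 1)\<close> by (simp only: dvd_minus_iff)
    qed
    then show ?thesis by blast
  qed
qed

lemma walk3: assumes "GE m n u x" "GE m n x y" "GE m n y v"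
  shows "\<exists>e\<in>{-3,-1,1,3}. int n dvd (T v - T u - e)"
proof -
  obtain e1 where e1: "e1 \<in> {-1,1}" "int n dvd (T x - T u - e1)" using edge_T[OF assms(1)] by blast
  obtain e2 where e2: "e2 \<in> {-1,1}" "int n dvd (T y - T x - e2)" using edge_T[OF assms(2)] by blast
  obtain e3 where e3: "e3 \<in> {-1,1}" "int n dvd (T v - T y - e3)" using edge_T[OF assms(3)] by blast
  have "int n dvd ((T x - T u - e1) + (T y - T x - e2) + (T v - T y - e3))"
    using e1(2) e2(2) e3(2) by (intro dvd_add)
  also have "(T x - T u - e1) + (T y - T x - e2) + (T v - T y - e3) = T v - T u - (e1+e2+e3)" by simp
  finally show ?thesis using e1(1) e2(1) e3(1) by (intro bexI[of _ "e1+e2+e3"]) auto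
qed

lemma P4_walk: assumes "P4_ends (GV m n) (GE m n) u v"
  shows "\<exists>e\<in>{-3,-1,1,3}. int n dvd (T v - T u - e)"
  using assms unfolding P4_ends_def using walk3 by blast

lemma upper_gen:
  assumes n: "n \<ge> 1"
    and sK: "\<And>a. a < n \<Longrightarrow> s a \<in> {1..K}"
    and sgood: "\<And>a b e. a < n \<Longrightarrow> b < n \<Longrightarrow> e \<in> {-3,-1,1,3} \<Longrightarrow> int n dvd (int b - int a - e) \<Longrightarrow> s a \<noteq> s b"
  shows "e_injective_coloring (GV m n) (GE m n) K (\<lambda>u. s ((fst u + snd u) mod n))"
  unfolding e_injective_coloring_def
proof (intro conjI allI impI ballI)
  fix v assume "v \<in> GV m n" then show "s ((fst v + snd v) mod n) \<in> {1..K}" using n sK by simp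
next
  fix u v assume "P4_ends (GV m n) (GE m n) u v"
  from P4_walk[OF this] obtain e where e: "e \<in> {-3,-1,1,3}" "int n dvd (T v - T u - e)" by blast
  define a where "a = (fst u + snd u) mod n"
  define b where "b = (fst v + snd v) mod n"
  have ia: "int a = T u mod int n" unfolding a_def T_def by (simp add: zmod_int)
  have ib: "int b = T v mod int n" unfolding b_def T_def by (simp add: zmod_int)
  have "int n dvd (int b - int a - e)"
  proof -
    have h1: "int n dvd (T v - T v mod int n)" by (simp add: minus_mod_eq_mult_div)
    have h2: "int n dvd (T u - T u mod int n)" by (simp add: minus_mod_eq_mult_div)
    have d: "int n dvd ((T v - T u - e) - (T v - T v mod int n) + (T u - T u mod int n))"
      by (rule dvd_add[OF dvd_diff[OF e(2) h1] h2])
    have eq: "(T v - T u - e) - (T v - T v mod int n) + (T u - T u mod int n) = int b - int a - e"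
      using ia ib by simp
    from d show ?thesis by (simp only: eq)
  qed
  moreover have "a < n" "b < n" using n by (auto simp: a_def b_def)
  ultimately show "s a \<noteq> s b" using sgood e(1) by blast
qed


lemma good_even: assumes "even n" "a < n" "b < n" "e \<in> {-3,-1,1,3}" "int n dvd (int b - int a - e)"
  shows "1 + a mod 2 \<noteq> 1 + b mod 2"
proof -
  have "2 dvd int n" using assms(1) by simp
  then have "2 dvd (int b - int a - e)" using assms(5) by (rule dvd_trans)
  then show ?thesis using assms(4) by (auto; presburger)
qed

lemma good_5: assumes "a < 5" "b < (5::nat)" "e \<in> {-3,-1,1,3}" "int 5 dvd (int b - int a - e)"
  shows "a + 1 \<noteq> b + 1"
  using assms by auto

definition s7 :: "nat \<Rightarrow> nat" where
  "s7 a = (if a = 0 \<or> a = 2 then 1 else if a = 1 \<or> a = 3 then 2 else if a = 4 \<or> a = 6 then 3 else 4)"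

lemma s7_eq: "s7 a = s7 b \<Longrightarrow> a < 7 \<Longrightarrow> b < 7 \<Longrightarrow> int b - int a = 0 \<or> int b - int a = 2 \<or> int b - int a = -2"
  unfolding s7_def by (auto split: if_splits; arith)

lemma good_7: assumes "a < 7" "b < (7::nat)" "e \<in> {-3,-1,1,3}" "int 7 dvd (int b - int a - e)"
  shows "s7 a \<noteq> s7 b"
proof
  assume "s7 a = s7 b"
  from s7_eq[OF this assms(1,2)] have d: "int b - int a = 0 \<or> int b - int a = 2 \<or> int b - int a = -2" .
  obtain k where k: "int b - int a - e = 7 * k" using assms(4) by (auto elim: dvdE)
  have e4: "e = -3 \<or> e = -1 \<or> e = 1 \<or> e = 3" using assms(3) by simp
  have "-5 \<le> 7 * k" "7 * k \<le> 5" using d e4 k by auto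
  then have "k = 0" by linarith
  then show False using d e4 k by auto
qed

definition s9 :: "nat \<Rightarrow> nat \<Rightarrow> nat" where
  "s9 n x = (if x + 5 < n then 1 + x mod 2 else if x + 5 = n then 3 else if x + 4 = n then 2
       else if x + 3 = n then 3 else if x + 2 = n then 1 else 3)"

lemma H1: "odd n \<Longrightarrow> a + 1 < n \<Longrightarrow> s9 n a \<noteq> s9 n (a+1)"
  by (auto simp: s9_def split: if_splits; presburger)
lemma H3: "odd n \<Longrightarrow> a + 3 < n \<Longrightarrow> s9 n a \<noteq> s9 n (a+3)"
  by (auto simp: s9_def split: if_splits; presburger)
lemma W: "odd n \<Longrightarrow> n \<ge> 9 \<Longrightarrow> x < 3 \<Longrightarrow> s9 n (n-3+x) \<noteq> s9 n x"
  by (auto simp: s9_def split: if_splits; presburger)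
lemma W1: "odd n \<Longrightarrow> n \<ge> 9 \<Longrightarrow> s9 n (n-1) \<noteq> s9 n 0"
  by (auto simp: s9_def split: if_splits; presburger)

lemma good_9: assumes "odd n" "n \<ge> 9" "a < n" "b < n" "e \<in> {-3,-1,1,3}" "int n dvd (int b - int a - e)"
  shows "s9 n a \<noteq> s9 n b"
proof -
  obtain k where k: "int b - int a - e = int n * k" using assms(6) by (auto elim: dvdE)
  have "k \<ge> -1" "k \<le> 1"
  proof (rule ccontr)
    assume "\<not> k \<ge> -1" then have "k \<le> -2" by simp
    then have "int n * k \<le> int n * (-2)" using assms(2) by (intro mult_left_mono) auto
    then have "int b - int a - e \<le> - 2 * int n" using k by simp
    then show False using assms(2-5) by auto
  next
    show "k \<le> 1"
    proof (rule ccontr)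
      assume "\<not> k \<le> 1" then have "k \<ge> 2" by simp
      then have "int n * k \<ge> int n * 2" using assms(2) by (intro mult_left_mono) auto
      then have "int b - int a - e \<ge> 2 * int n" using k by simp
      then show False using assms(2-5) by auto
    qed
  qed
  then have kk: "k = -1 \<or> k = 0 \<or> k = 1" by auto
  have e4: "e = -3 \<or> e = -1 \<or> e = 1 \<or> e = 3" using assms(5) by simp
  from kk e4 show ?thesis
  proof (elim disjE)
    assume kc: "k = -1" and ec: "e = -3"
    have ie: "int b - int a - (-3) = int n * (-1)" using k kc ec by simp
    show ?thesis using ie assms(3,4) by linarith
  next
    assume kc: "k = -1" and ec: "e = -1"
    have ie: "int b - int a - (-1) = int n * (-1)" using k kc ec by simp
    show ?thesis using ie assms(3,4) by linarith
  next
    assume kc: "k = -1" and ec: "e = 1"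
    have ie: "int b - int a - (1) = int n * (-1)" using k kc ec by simp
    have "b = 0 \<and> a = n - 1" using ie assms(2-4) by linarith
    then show ?thesis using W1[of n] assms by auto
  next
    assume kc: "k = -1" and ec: "e = 3"
    have ie: "int b - int a - (3) = int n * (-1)" using k kc ec by simp
    have "b < 3 \<and> a = n - 3 + b" using ie assms(2-4) by linarith
    then show ?thesis using W[of n b] assms by auto
  next
    assume kc: "k = 0" and ec: "e = -3"
    have ie: "int b - int a - (-3) = int n * (0)" using k kc ec by simp
    have "a = b + 3" using ie assms(2-4) by linarith
    then show ?thesis using H3[of n b] assms by auto
  next
    assume kc: "k = 0" and ec: "e = -1"
    have ie: "int b - int a - (-1) = int n * (0)" using k kc ec by simp
    have "a = b + 1" using ie assms(2-4) by linarith
    then show ?thesis using H1[of n b] assms by auto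
  next
    assume kc: "k = 0" and ec: "e = 1"
    have ie: "int b - int a - (1) = int n * (0)" using k kc ec by simp
    have "b = a + 1" using ie assms(2-4) by linarith
    then show ?thesis using H1[of n a] assms by auto
  next
    assume kc: "k = 0" and ec: "e = 3"
    have ie: "int b - int a - (3) = int n * (0)" using k kc ec by simp
    have "b = a + 3" using ie assms(2-4) by linarith
    then show ?thesis using H3[of n a] assms by auto
  next
    assume kc: "k = 1" and ec: "e = -3"
    have ie: "int b - int a - (-3) = int n * (1)" using k kc ec by simp
    have "a < 3 \<and> b = n - 3 + a" using ie assms(2-4) by linarith
    then show ?thesis using W[of n a] assms by auto
  next
    assume kc: "k = 1" and ec: "e = -1"
    have ie: "int b - int a - (-1) = int n * (1)" using k kc ec by simp
    have "a = 0 \<and> b = n - 1" using ie assms(2-4) by linarith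
    then show ?thesis using W1[of n] assms by auto
  next
    assume kc: "k = 1" and ec: "e = 1"
    have ie: "int b - int a - (1) = int n * (1)" using k kc ec by simp
    show ?thesis using ie assms(3,4) by linarith
  next
    assume kc: "k = 1" and ec: "e = 3"
    have ie: "int b - int a - (3) = int n * (1)" using k kc ec by simp
    show ?thesis using ie assms(3,4) by linarith
  qed
qed


lemma P4I: "distinct [u,x,y,v] \<Longrightarrow> u \<in> V \<Longrightarrow> x \<in> V \<Longrightarrow> y \<in> V \<Longrightarrow> v \<in> V \<Longrightarrow> E u x \<Longrightarrow> E x y \<Longrightarrow> E y v
  \<Longrightarrow> P4_ends V E u v"
  unfolding P4_ends_def by blast

lemma GE_sym: "GE m n u x \<Longrightarrow> GE m n x u"
  unfolding cart_E_def path_E_def cycle_E_def by (elim disjE conjE) force+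

lemma P4_sym: "P4_ends (GV m n) (GE m n) u v \<Longrightarrow> P4_ends (GV m n) (GE m n) v u"
proof -
  assume "P4_ends (GV m n) (GE m n) u v"
  then obtain x y where h: "distinct [u, x, y, v]" "u \<in> GV m n" "x \<in> GV m n" "y \<in> GV m n" "v \<in> GV m n"
      "GE m n u x" "GE m n x y" "GE m n y v" unfolding P4_ends_def by blast
  show ?thesis
    by (rule P4I[of v y x u]) (use h GE_sym in auto)
qed

lemma col_ne: "e_injective_coloring V E k f \<Longrightarrow> P4_ends V E u v \<Longrightarrow> f u \<noteq> f v"
  unfolding e_injective_coloring_def by blast

lemma col_rng: "e_injective_coloring V E k f \<Longrightarrow> u \<in> V \<Longrightarrow> f u \<in> {1..k}"
  unfolding e_injective_coloring_def by blast

lemma clique_bound: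
  assumes "e_injective_coloring V E k f" "S \<subseteq> V" "finite S"
    "\<And>x y. x \<in> S \<Longrightarrow> y \<in> S \<Longrightarrow> x \<noteq> y \<Longrightarrow> P4_ends V E x y"
  shows "card S \<le> k"
proof -
  have "inj_on f S" using assms(4) col_ne[OF assms(1)] unfolding inj_on_def by blast
  moreover have "f ` S \<subseteq> {1..k}" using col_rng[OF assms(1)] assms(2) by blast
  ultimately have "card S \<le> card {1..k}" by (intro card_inj_on_le) auto
  then show ?thesis by simp
qed

lemma ends3: assumes "m \<ge> 2" shows
  "P4_ends (GV m 3) (GE m 3) (0,0) (0,1)"
  "P4_ends (GV m 3) (GE m 3) (0,0) (0,2)"
  "P4_ends (GV m 3) (GE m 3) (0,0) (1,0)"
  "P4_ends (GV m 3) (GE m 3) (0,0) (1,1)"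
  "P4_ends (GV m 3) (GE m 3) (0,0) (1,2)"
  "P4_ends (GV m 3) (GE m 3) (0,1) (0,2)"
  "P4_ends (GV m 3) (GE m 3) (0,1) (1,0)"
  "P4_ends (GV m 3) (GE m 3) (0,1) (1,1)"
  "P4_ends (GV m 3) (GE m 3) (0,1) (1,2)"
  "P4_ends (GV m 3) (GE m 3) (0,2) (1,0)"
  "P4_ends (GV m 3) (GE m 3) (0,2) (1,1)"
  "P4_ends (GV m 3) (GE m 3) (0,2) (1,2)"
  "P4_ends (GV m 3) (GE m 3) (1,0) (1,1)"
  "P4_ends (GV m 3) (GE m 3) (1,0) (1,2)"
  "P4_ends (GV m 3) (GE m 3) (1,1) (1,2)"
proof -
  have m1: "1 < m" using assms by simp
  have "P4_ends (GV m 3) (GE m 3) (0,0) (0,1)" by (rule P4I[of _ "(1,0)" "(1,1)"]) (use m1 in \<open>auto simp: GV_iff GE_iff\<close>)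
  moreover
  have "P4_ends (GV m 3) (GE m 3) (0,0) (0,2)" by (rule P4I[of _ "(1,0)" "(1,2)"]) (use m1 in \<open>auto simp: GV_iff GE_iff\<close>)
  moreover
  have "P4_ends (GV m 3) (GE m 3) (0,0) (1,0)" by (rule P4I[of _ "(0,1)" "(1,1)"]) (use m1 in \<open>auto simp: GV_iff GE_iff\<close>)
  moreover
  have "P4_ends (GV m 3) (GE m 3) (0,0) (1,1)" by (rule P4I[of _ "(0,2)" "(1,2)"]) (use m1 in \<open>auto simp: GV_iff GE_iff\<close>)
  moreover
  have "P4_ends (GV m 3) (GE m 3) (0,0) (1,2)" by (rule P4I[of _ "(0,1)" "(1,1)"]) (use m1 in \<open>auto simp: GV_iff GE_iff\<close>)
  moreover
  have "P4_ends (GV m 3) (GE m 3) (0,1) (0,2)" by (rule P4I[of _ "(1,1)" "(1,2)"]) (use m1 in \<open>auto simp: GV_iff GE_iff\<close>)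
  moreover
  have "P4_ends (GV m 3) (GE m 3) (0,1) (1,0)" by (rule P4I[of _ "(0,2)" "(1,2)"]) (use m1 in \<open>auto simp: GV_iff GE_iff\<close>)
  moreover
  have "P4_ends (GV m 3) (GE m 3) (0,1) (1,1)" by (rule P4I[of _ "(0,0)" "(1,0)"]) (use m1 in \<open>auto simp: GV_iff GE_iff\<close>)
  moreover
  have "P4_ends (GV m 3) (GE m 3) (0,1) (1,2)" by (rule P4I[of _ "(0,0)" "(1,0)"]) (use m1 in \<open>auto simp: GV_iff GE_iff\<close>)
  moreover
  have "P4_ends (GV m 3) (GE m 3) (0,2) (1,0)" by (rule P4I[of _ "(0,1)" "(1,1)"]) (use m1 in \<open>auto simp: GV_iff GE_iff\<close>)
  moreover
  have "P4_ends (GV m 3) (GE m 3) (0,2) (1,1)" by (rule P4I[of _ "(0,0)" "(1,0)"]) (use m1 in \<open>auto simp: GV_iff GE_iff\<close>)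
  moreover
  have "P4_ends (GV m 3) (GE m 3) (0,2) (1,2)" by (rule P4I[of _ "(0,0)" "(1,0)"]) (use m1 in \<open>auto simp: GV_iff GE_iff\<close>)
  moreover
  have "P4_ends (GV m 3) (GE m 3) (1,0) (1,1)" by (rule P4I[of _ "(0,0)" "(0,1)"]) (use m1 in \<open>auto simp: GV_iff GE_iff\<close>)
  moreover
  have "P4_ends (GV m 3) (GE m 3) (1,0) (1,2)" by (rule P4I[of _ "(0,0)" "(0,2)"]) (use m1 in \<open>auto simp: GV_iff GE_iff\<close>)
  moreover
  have "P4_ends (GV m 3) (GE m 3) (1,1) (1,2)" by (rule P4I[of _ "(0,1)" "(0,2)"]) (use m1 in \<open>auto simp: GV_iff GE_iff\<close>)
  ultimately show "P4_ends (GV m 3) (GE m 3) (0,0) (0,1)" "P4_ends (GV m 3) (GE m 3) (0,0) (0,2)" "P4_ends (GV m 3) (GE m 3) (0,0) (1,0)" "P4_ends (GV m 3) (GE m 3) (0,0) (1,1)" "P4_ends (GV m 3) (GE m 3) (0,0) (1,2)" "P4_ends (GV m 3) (GE m 3) (0,1) (0,2)" "P4_ends (GV m 3) (GE m 3) (0,1) (1,0)" "P4_ends (GV m 3) (GE m 3) (0,1) (1,1)" "P4_ends (GV m 3) (GE m 3) (0,1) (1,2)" "P4_ends (GV m 3) (GE m 3) (0,2) (1,0)" "P4_ends (GV m 3) (GE m 3) (0,2) (1,1)" "P4_ends (GV m 3) (GE m 3) (0,2) (1,2)" "P4_ends (GV m 3) (GE m 3) (1,0) (1,1)" "P4_ends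 (GV m 3) (GE m 3) (1,0) (1,2)" "P4_ends (GV m 3) (GE m 3) (1,1) (1,2)" by blast+
qed

lemma ends5: assumes "m \<ge> 2" shows
  "P4_ends (GV m 5) (GE m 5) (0,0) (0,1)"
  "P4_ends (GV m 5) (GE m 5) (0,0) (0,2)"
  "P4_ends (GV m 5) (GE m 5) (0,0) (0,3)"
  "P4_ends (GV m 5) (GE m 5) (0,0) (0,4)"
  "P4_ends (GV m 5) (GE m 5) (0,1) (0,2)"
  "P4_ends (GV m 5) (GE m 5) (0,1) (0,3)"
  "P4_ends (GV m 5) (GE m 5) (0,1) (0,4)"
  "P4_ends (GV m 5) (GE m 5) (0,2) (0,3)"
  "P4_ends (GV m 5) (GE m 5) (0,2) (0,4)"
  "P4_ends (GV m 5) (GE m 5) (0,3) (0,4)"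
proof -
  have m1: "1 < m" using assms by simp
  have "P4_ends (GV m 5) (GE m 5) (0,0) (0,1)" by (rule P4I[of _ "(1,0)" "(1,1)"]) (use m1 in \<open>auto simp: GV_iff GE_iff\<close>)
  moreover
  have "P4_ends (GV m 5) (GE m 5) (0,0) (0,2)" by (rule P4I[of _ "(0,4)" "(0,3)"]) (use m1 in \<open>auto simp: GV_iff GE_iff\<close>)
  moreover
  have "P4_ends (GV m 5) (GE m 5) (0,0) (0,3)" by (rule P4I[of _ "(0,1)" "(0,2)"]) (use m1 in \<open>auto simp: GV_iff GE_iff\<close>)
  moreover
  have "P4_ends (GV m 5) (GE m 5) (0,0) (0,4)" by (rule P4I[of _ "(1,0)" "(1,4)"]) (use m1 in \<open>auto simp: GV_iff GE_iff\<close>)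
  moreover
  have "P4_ends (GV m 5) (GE m 5) (0,1) (0,2)" by (rule P4I[of _ "(1,1)" "(1,2)"]) (use m1 in \<open>auto simp: GV_iff GE_iff\<close>)
  moreover
  have "P4_ends (GV m 5) (GE m 5) (0,1) (0,3)" by (rule P4I[of _ "(0,0)" "(0,4)"]) (use m1 in \<open>auto simp: GV_iff GE_iff\<close>)
  moreover
  have "P4_ends (GV m 5) (GE m 5) (0,1) (0,4)" by (rule P4I[of _ "(0,2)" "(0,3)"]) (use m1 in \<open>auto simp: GV_iff GE_iff\<close>)
  moreover
  have "P4_ends (GV m 5) (GE m 5) (0,2) (0,3)" by (rule P4I[of _ "(1,2)" "(1,3)"]) (use m1 in \<open>auto simp: GV_iff GE_iff\<close>)
  moreover
  have "P4_ends (GV m 5) (GE m 5) (0,2) (0,4)" by (rule P4I[of _ "(0,1)" "(0,0)"]) (use m1 in \<open>auto simp: GV_iff GE_iff\<close>)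
  moreover
  have "P4_ends (GV m 5) (GE m 5) (0,3) (0,4)" by (rule P4I[of _ "(1,3)" "(1,4)"]) (use m1 in \<open>auto simp: GV_iff GE_iff\<close>)
  ultimately show "P4_ends (GV m 5) (GE m 5) (0,0) (0,1)" "P4_ends (GV m 5) (GE m 5) (0,0) (0,2)" "P4_ends (GV m 5) (GE m 5) (0,0) (0,3)" "P4_ends (GV m 5) (GE m 5) (0,0) (0,4)" "P4_ends (GV m 5) (GE m 5) (0,1) (0,2)" "P4_ends (GV m 5) (GE m 5) (0,1) (0,3)" "P4_ends (GV m 5) (GE m 5) (0,1) (0,4)" "P4_ends (GV m 5) (GE m 5) (0,2) (0,3)" "P4_ends (GV m 5) (GE m 5) (0,2) (0,4)" "P4_ends (GV m 5) (GE m 5) (0,3) (0,4)" by blast+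
qed

lemma ends7: assumes "m \<ge> 2" shows
  "P4_ends (GV m 7) (GE m 7) (0,0) (0,1)"
  "P4_ends (GV m 7) (GE m 7) (0,0) (0,3)"
  "P4_ends (GV m 7) (GE m 7) (0,1) (0,2)"
  "P4_ends (GV m 7) (GE m 7) (0,1) (0,4)"
  "P4_ends (GV m 7) (GE m 7) (0,2) (0,3)"
  "P4_ends (GV m 7) (GE m 7) (0,2) (0,5)"
  "P4_ends (GV m 7) (GE m 7) (0,3) (0,4)"
  "P4_ends (GV m 7) (GE m 7) (0,3) (0,6)"
  "P4_ends (GV m 7) (GE m 7) (0,4) (0,5)"
  "P4_ends (GV m 7) (GE m 7) (0,4) (0,0)"
  "P4_ends (GV m 7) (GE m 7) (0,5) (0,6)"
  "P4_ends (GV m 7) (GE m 7) (0,5) (0,1)"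
  "P4_ends (GV m 7) (GE m 7) (0,6) (0,0)"
  "P4_ends (GV m 7) (GE m 7) (0,6) (0,2)"
proof -
  have m1: "1 < m" using assms by simp
  have "P4_ends (GV m 7) (GE m 7) (0,0) (0,1)" by (rule P4I[of _ "(1,0)" "(1,1)"]) (use m1 in \<open>auto simp: GV_iff GE_iff\<close>)
  moreover
  have "P4_ends (GV m 7) (GE m 7) (0,0) (0,3)" by (rule P4I[of _ "(0,1)" "(0,2)"]) (use m1 in \<open>auto simp: GV_iff GE_iff\<close>)
  moreover
  have "P4_ends (GV m 7) (GE m 7) (0,1) (0,2)" by (rule P4I[of _ "(1,1)" "(1,2)"]) (use m1 in \<open>auto simp: GV_iff GE_iff\<close>)
  moreover
  have "P4_ends (GV m 7) (GE m 7) (0,1) (0,4)" by (rule P4I[of _ "(0,2)" "(0,3)"]) (use m1 in \<open>auto simp: GV_iff GE_iff\<close>)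
  moreover
  have "P4_ends (GV m 7) (GE m 7) (0,2) (0,3)" by (rule P4I[of _ "(1,2)" "(1,3)"]) (use m1 in \<open>auto simp: GV_iff GE_iff\<close>)
  moreover
  have "P4_ends (GV m 7) (GE m 7) (0,2) (0,5)" by (rule P4I[of _ "(0,3)" "(0,4)"]) (use m1 in \<open>auto simp: GV_iff GE_iff\<close>)
  moreover
  have "P4_ends (GV m 7) (GE m 7) (0,3) (0,4)" by (rule P4I[of _ "(1,3)" "(1,4)"]) (use m1 in \<open>auto simp: GV_iff GE_iff\<close>)
  moreover
  have "P4_ends (GV m 7) (GE m 7) (0,3) (0,6)" by (rule P4I[of _ "(0,4)" "(0,5)"]) (use m1 in \<open>auto simp: GV_iff GE_iff\<close>)
  moreover
  have "P4_ends (GV m 7) (GE m 7) (0,4) (0,5)" by (rule P4I[of _ "(1,4)" "(1,5)"]) (use m1 in \<open>auto simp: GV_iff GE_iff\<close>)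
  moreover
  have "P4_ends (GV m 7) (GE m 7) (0,4) (0,0)" by (rule P4I[of _ "(0,5)" "(0,6)"]) (use m1 in \<open>auto simp: GV_iff GE_iff\<close>)
  moreover
  have "P4_ends (GV m 7) (GE m 7) (0,5) (0,6)" by (rule P4I[of _ "(1,5)" "(1,6)"]) (use m1 in \<open>auto simp: GV_iff GE_iff\<close>)
  moreover
  have "P4_ends (GV m 7) (GE m 7) (0,5) (0,1)" by (rule P4I[of _ "(0,6)" "(0,0)"]) (use m1 in \<open>auto simp: GV_iff GE_iff\<close>)
  moreover
  have "P4_ends (GV m 7) (GE m 7) (0,6) (0,0)" by (rule P4I[of _ "(1,6)" "(1,0)"]) (use m1 in \<open>auto simp: GV_iff GE_iff\<close>)
  moreover
  have "P4_ends (GV m 7) (GE m 7) (0,6) (0,2)" by (rule P4I[of _ "(0,0)" "(0,1)"]) (use m1 in \<open>auto simp: GV_iff GE_iff\<close>)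
  ultimately show "P4_ends (GV m 7) (GE m 7) (0,0) (0,1)" "P4_ends (GV m 7) (GE m 7) (0,0) (0,3)" "P4_ends (GV m 7) (GE m 7) (0,1) (0,2)" "P4_ends (GV m 7) (GE m 7) (0,1) (0,4)" "P4_ends (GV m 7) (GE m 7) (0,2) (0,3)" "P4_ends (GV m 7) (GE m 7) (0,2) (0,5)" "P4_ends (GV m 7) (GE m 7) (0,3) (0,4)" "P4_ends (GV m 7) (GE m 7) (0,3) (0,6)" "P4_ends (GV m 7) (GE m 7) (0,4) (0,5)" "P4_ends (GV m 7) (GE m 7) (0,4) (0,0)" "P4_ends (GV m 7) (GE m 7) (0,5) (0,6)" "P4_ends (GV m 7) (GE m 7) (0,5) (0,1)" "P4_ends (GV m 7) (GE m 7) (0,6) (0,0)" "P4_ends (GV m 7) (GE m 7) (0,6) (0,2)" by blast+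
qed


lemma edge3: assumes "GE m 3 u x" shows "(even (fst x) = odd (fst u) \<and> snd x = snd u) \<or> (fst x = fst u \<and> snd x \<noteq> snd u)"
proof -
  obtain a b c d where u: "u = (a,b)" and x: "x = (c,d)" by (cases u, cases x) auto
  from assms consider "a + 1 = c" "d = b" | "c + 1 = a" "d = b" | "c = a" "d \<noteq> b"
    unfolding cart_E_def path_E_def cycle_E_def u x by auto
  then show ?thesis unfolding u x by cases auto
qed

lemma comb3:
  fixes fu fx fy fv su sx sy sv :: nat
  assumes "(even fx = odd fu \<and> sx = su) \<or> (fx = fu \<and> sx \<noteq> su)"
    "(even fy = odd fx \<and> sy = sx) \<or> (fy = fx \<and> sy \<noteq> sx)"
    "(even fv = odd fy \<and> sv = sy) \<or> (fv = fy \<and> sv \<noteq> sy)"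
    "su = sv" "even fu = even fv" "fu = fv \<longrightarrow> su \<noteq> sv"
  shows False
  using assms by auto

lemma eq3: fixes a b c d :: nat assumes "b < 3" "d < 3" "1 + 3 * (a mod 2) + b = 1 + 3 * (c mod 2) + d"
  shows "b = d \<and> (even a = even c)"
proof -
  have "a mod 2 = 0 \<or> a mod 2 = 1" "c mod 2 = 0 \<or> c mod 2 = 1" by auto
  then show ?thesis using assms by (elim disjE) (simp_all add: even_iff_mod_2_eq_zero)
qed

lemma upper3: "e_injective_coloring (GV m 3) (GE m 3) 6 (\<lambda>u. 1 + 3 * (fst u mod 2) + snd u)"
  unfolding e_injective_coloring_def
proof (intro conjI allI impI ballI)
  fix v assume "v \<in> GV m 3" then show "1 + 3 * (fst v mod 2) + snd v \<in> {1..6}"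
    unfolding GV_iff by auto
next
  fix u v assume "P4_ends (GV m 3) (GE m 3) u v"
  then obtain x y where h: "distinct [u, x, y, v]" "u \<in> GV m 3" "v \<in> GV m 3"
      "GE m 3 u x" "GE m 3 x y" "GE m 3 y v" unfolding P4_ends_def by blast
  show "1 + 3 * (fst u mod 2) + snd u \<noteq> 1 + 3 * (fst v mod 2) + snd v"
  proof
    assume eq: "1 + 3 * (fst u mod 2) + snd u = 1 + 3 * (fst v mod 2) + snd v"
    have "snd u < 3" "snd v < 3" using h(2,3) unfolding GV_iff by auto
    from eq3[OF this eq] have se: "snd u = snd v" and pe: "even (fst u) = even (fst v)" by auto
    have uv: "fst u = fst v \<longrightarrow> snd u \<noteq> snd v" using h(1) by (auto simp: prod_eq_iff)
    from comb3[OF edge3[OF h(4)] edge3[OF h(5)] edge3[OF h(6)] se pe uv] show False .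
  qed
qed

lemma row_adj: assumes "m \<ge> 2" "j + 1 < n" shows "P4_ends (GV m n) (GE m n) (0,j) (0,j+1)"
  by (rule P4I[of _ "(1,j)" "(1,j+1)"]) (use assms in \<open>auto simp: GV_iff GE_iff\<close>)

lemma row_wrap: assumes "m \<ge> 2" "n \<ge> 3" shows "P4_ends (GV m n) (GE m n) (0,n-1) (0,0)"
  by (rule P4I[of _ "(1,n-1)" "(1,0)"]) (use assms in \<open>auto simp: GV_iff GE_iff\<close>)

lemma lower2: assumes "m \<ge> 2" "n \<ge> 3" "e_injective_coloring (GV m n) (GE m n) k f" shows "2 \<le> k"
proof -
  have "f (0,0) \<noteq> f (0,1)" using col_ne[OF assms(3) row_adj[of m 0 n]] assms by simp
  moreover have "f (0,0) \<in> {1..k}" "f (0,1) \<in> {1..k}" using col_rng[OF assms(3)] assms by (auto simp: GV_iff)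
  ultimately show ?thesis by auto
qed

lemma lower_odd: assumes "m \<ge> 2" "n \<ge> 3" "odd n" "e_injective_coloring (GV m n) (GE m n) k f" shows "3 \<le> k"
proof (rule ccontr)
  assume "\<not> 3 \<le> k" then have k2: "k \<le> 2" by simp
  have rng: "j < n \<Longrightarrow> f (0,j) = 1 \<or> f (0,j) = 2" for j
    using col_rng[OF assms(4), of "(0,j)"] assms(1) k2 by (auto simp: GV_iff)
  define c where "c = f (0,0)"
  have c12: "c = 1 \<or> c = 2" using rng[of 0] assms(2) by (simp add: c_def)
  have claim: "j < n \<Longrightarrow> f (0,j) = (if even j then c else 3 - c)" for j
  proof (induction j)
    case 0 then show ?case by (simp add: c_def)
  next
    case (Suc j)
    then have IH: "f (0,j) = (if even j then c else 3 - c)" by simp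
    have ne: "f (0,j) \<noteq> f (0,Suc j)" using col_ne[OF assms(4) row_adj[of m j n]] assms(1) Suc.prems by simp
    have "f (0,j) = 1 \<or> f (0,j) = 2" "f (0,Suc j) = 1 \<or> f (0, Suc j) = 2" using rng Suc.prems by auto
    then show ?case using IH ne c12 by auto
  qed
  have "f (0, n-1) = c" using claim[of "n-1"] assms(2,3) by simp
  moreover have "f (0, n-1) \<noteq> f (0,0)" using col_ne[OF assms(4) row_wrap[OF assms(1,2)]] .
  ultimately show False by (simp add: c_def)
qed

lemma lower3: assumes "m \<ge> 2" "e_injective_coloring (GV m 3) (GE m 3) k f" shows "6 \<le> k"
proof -
  let ?S = "{(0,0),(0,1),(0,2),(1,0),(1,1),(1,2)} :: (nat \<times> nat) set"
  note E = ends3[OF assms(1)]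
  note ES = E P4_sym[OF E(1)] P4_sym[OF E(2)] P4_sym[OF E(3)] P4_sym[OF E(4)] P4_sym[OF E(5)]
    P4_sym[OF E(6)] P4_sym[OF E(7)] P4_sym[OF E(8)] P4_sym[OF E(9)] P4_sym[OF E(10)]
    P4_sym[OF E(11)] P4_sym[OF E(12)] P4_sym[OF E(13)] P4_sym[OF E(14)] P4_sym[OF E(15)]
  have "card ?S \<le> k"
    by (rule clique_bound[OF assms(2)]) (use assms(1) ES in \<open>auto simp: GV_iff\<close>)
  then show ?thesis by simp
qed

lemma lower5: assumes "m \<ge> 2" "e_injective_coloring (GV m 5) (GE m 5) k f" shows "5 \<le> k"
proof -
  let ?S = "{(0,0),(0,1),(0,2),(0,3),(0,4)} :: (nat \<times> nat) set"
  note E = ends5[OF assms(1)]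
  note ES = E P4_sym[OF E(1)] P4_sym[OF E(2)] P4_sym[OF E(3)] P4_sym[OF E(4)] P4_sym[OF E(5)]
    P4_sym[OF E(6)] P4_sym[OF E(7)] P4_sym[OF E(8)] P4_sym[OF E(9)] P4_sym[OF E(10)]
  have "card ?S \<le> k"
    by (rule clique_bound[OF assms(2)]) (use assms(1) ES in \<open>auto simp: GV_iff\<close>)
  then show ?thesis by simp
qed

lemma no3col7: "\<lbrakk>w0 \<in> {1..k}; w1 \<in> {1..k}; w2 \<in> {1..k}; w3 \<in> {1..k}; w4 \<in> {1..k}; w5 \<in> {1..k}; w6 \<in> {1..k};
  w0 \<noteq> w1; w1 \<noteq> w2; w2 \<noteq> w3; w3 \<noteq> w4; w4 \<noteq> w5; w5 \<noteq> w6; w6 \<noteq> w0;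
  w0 \<noteq> w3; w1 \<noteq> w4; w2 \<noteq> w5; w3 \<noteq> w6; w4 \<noteq> w0; w5 \<noteq> w1; w6 \<noteq> w2; (k::nat) \<le> 3\<rbrakk> \<Longrightarrow> False"
proof -
  assume a: "w0 \<in> {1..k}" "w1 \<in> {1..k}" "w2 \<in> {1..k}" "w3 \<in> {1..k}" "w4 \<in> {1..k}" "w5 \<in> {1..k}" "w6 \<in> {1..k}"
  and b: "w0 \<noteq> w1" "w1 \<noteq> w2" "w2 \<noteq> w3" "w3 \<noteq> w4" "w4 \<noteq> w5" "w5 \<noteq> w6" "w6 \<noteq> w0"
  "w0 \<noteq> w3" "w1 \<noteq> w4" "w2 \<noteq> w5" "w3 \<noteq> w6" "w4 \<noteq> w0" "w5 \<noteq> w1" "w6 \<noteq> w2"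
  and k3: "(k::nat) \<le> 3"
  have c: "w \<in> {1..k} \<Longrightarrow> w = 1 \<or> w = 2 \<or> w = 3" for w using k3 by auto
  from c[OF a(1)] c[OF a(2)] c[OF a(3)] c[OF a(4)] c[OF a(5)] c[OF a(6)] c[OF a(7)] b show False
    by smt
qed

lemma lower7: assumes "m \<ge> 2" "e_injective_coloring (GV m 7) (GE m 7) k f" shows "4 \<le> k"
proof (rule ccontr)
  assume "\<not> 4 \<le> k" then have k3: "k \<le> 3" by simp
  note E = ends7[OF assms(1)]
  note N = col_ne[OF assms(2)]
  have r: "j < 7 \<Longrightarrow> f (0,j) \<in> {1..k}" for j using col_rng[OF assms(2), of "(0,j)"] assms(1) by (auto simp: GV_iff)
  have "f (0,0) \<in> {1..k}" "f (0,1) \<in> {1..k}" "f (0,2) \<in> {1..k}" "f (0,3) \<in> {1..k}" "f (0,4) \<in> {1..k}"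
    "f (0,5) \<in> {1..k}" "f (0,6) \<in> {1..k}" using r by auto
  moreover have "f (0,0) \<noteq> f (0,1)" "f (0,1) \<noteq> f (0,2)" "f (0,2) \<noteq> f (0,3)" "f (0,3) \<noteq> f (0,4)"
    "f (0,4) \<noteq> f (0,5)" "f (0,5) \<noteq> f (0,6)" "f (0,6) \<noteq> f (0,0)"
    "f (0,0) \<noteq> f (0,3)" "f (0,1) \<noteq> f (0,4)" "f (0,2) \<noteq> f (0,5)" "f (0,3) \<noteq> f (0,6)"
    "f (0,4) \<noteq> f (0,0)" "f (0,5) \<noteq> f (0,1)" "f (0,6) \<noteq> f (0,2)"
    using N[OF E(1)] N[OF E(2)] N[OF E(3)] N[OF E(4)] N[OF E(5)] N[OF E(6)] N[OF E(7)]
      N[OF E(8)] N[OF E(9)] N[OF E(10)] N[OF E(11)] N[OF E(12)] N[OF E(13)] N[OF E(14)] by simp_all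
  ultimately show False using k3 by (rule no3col7)
qed


lemma chi_eq: assumes "e_injective_coloring V E K f" "\<And>k g. e_injective_coloring V E k g \<Longrightarrow> K \<le> k"
  shows "chi_ei V E = K"
  unfolding chi_ei_def by (rule Least_equality) (use assms in blast)+

theorem theorem4p4:
  fixes m n :: nat
  assumes "m \<ge> 2" and "n \<ge> 3"
  shows "chi_ei (cart_V (path_V m) (cycle_V n))
                (cart_E (path_V m) (path_E m) (cycle_V n) (cycle_E n)) =
         (if n = 3 then 6 else if n = 5 then 5 else if n = 7 then 4
          else if even n then 2 else 3)"
proof -
  have "n = 3 \<or> n = 5 \<or> n = 7 \<or> even n \<or> (odd n \<and> n \<ge> 9)"
  proof (cases "even n")
    case False
    then have "n \<noteq> 4" "n \<noteq> 6" "n \<noteq> 8" by auto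
    then show ?thesis using assms(2) False by auto
  qed simp
  then consider "n = 3" | "n = 5" | "n = 7" | "even n" | "odd n" "n \<ge> 9" "n \<noteq> 3" "n \<noteq> 5" "n \<noteq> 7"
    by auto
  then show ?thesis
  proof cases
    case 1
    have "chi_ei (GV m n) (GE m n) = 6"
      unfolding 1 by (rule chi_eq[OF upper3 lower3[OF assms(1)]])
    then show ?thesis using 1 by simp
  next
    case 2
    have "e_injective_coloring (GV m 5) (GE m 5) 5 (\<lambda>u. (\<lambda>a. a + 1) ((fst u + snd u) mod 5))"
    proof (rule upper_gen[of 5 "\<lambda>a. a + 1" 5 m])
      fix a b e assume "a < 5" "b < 5" "e \<in> {-3,-1,1,3}" "int 5 dvd (int b - int a - e)"
      then show "a + 1 \<noteq> b + 1" by (rule good_5)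
    qed (use assms(2) in \<open>auto \<close>)
    then have "chi_ei (GV m n) (GE m n) = 5"
      unfolding 2 by (rule chi_eq[OF _ lower5[OF assms(1)]])
    then show ?thesis using 2 by simp
  next
    case 3
    have "e_injective_coloring (GV m 7) (GE m 7) 4 (\<lambda>u. s7 ((fst u + snd u) mod 7))"
    proof (rule upper_gen[of 7 "s7" 4 m])
      fix a b e assume "a < 7" "b < 7" "e \<in> {-3,-1,1,3}" "int 7 dvd (int b - int a - e)"
      then show "s7 a \<noteq> s7 b" by (rule good_7)
    qed (use assms(2) in \<open>auto simp: s7_def\<close>)
    then have "chi_ei (GV m n) (GE m n) = 4"
      unfolding 3 by (rule chi_eq[OF _ lower7[OF assms(1)]])
    then show ?thesis using 3 by simp
  next
    case 4
    have "e_injective_coloring (GV m n) (GE m n) 2 (\<lambda>u. (\<lambda>a. 1 + a mod 2) ((fst u + snd u) mod n))"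
    proof (rule upper_gen[of n "\<lambda>a. 1 + a mod 2" 2 m])
      fix a b e assume "a < n" "b < n" "e \<in> {-3,-1,1,3}" "int n dvd (int b - int a - e)"
      then show "1 + a mod 2 \<noteq> 1 + b mod 2" by (rule good_even[OF 4])
    qed (use assms(2) in \<open>auto \<close>)
    then have "chi_ei (GV m n) (GE m n) = 2"
      by (rule chi_eq[OF _ lower2[OF assms]])
    moreover have "n \<noteq> 3" "n \<noteq> 5" "n \<noteq> 7" using 4 by auto
    ultimately show ?thesis using 4 by simp
  next
    case 5
    have "e_injective_coloring (GV m n) (GE m n) 3 (\<lambda>u. s9 n ((fst u + snd u) mod n))"
    proof (rule upper_gen[of n "s9 n" 3 m])
      fix a b e assume "a < n" "b < n" "e \<in> {-3,-1,1,3}" "int n dvd (int b - int a - e)"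
      then show "s9 n a \<noteq> s9 n b" by (rule good_9[OF 5(1,2)])
    qed (use assms(2) in \<open>auto simp: s9_def\<close>)
    then have "chi_ei (GV m n) (GE m n) = 3"
      by (rule chi_eq[OF _ lower_odd[OF assms 5(1)]])
    then show ?thesis using 5 by simp
  qed
qed

end
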